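(* Let $(X,G)$ be a $G$-system with metric $d$ and $(F_n)$ a Følner sequence in $G$. For $\alpha,\varepsilon\in(0,1)$ define $d_{\alpha,\varepsilon}(x,y)=d(x,y)$ if $d(x,y)\ge\varepsilon$ and $d_{\alpha,\varepsilon}(x,y)=\varepsilon^{1-\alpha}d(x,y)^\alpha$ if $d(x,y)<\varepsilon$. Then $$\overline{\mathrm{mdim}}_{\mathrm H}(X,\{F_n\},d_{\alpha,\varepsilon})=\frac{\overline{\mathrm{mdim}}_{\mathrm H}(X,\{F_n\},d)}{\alpha}.$$
   Context: $G$ is a countable discrete amenable group; a $G$-system is a compact metric space with a continuous $G$-action. For finite nonempty $F\subset G$, $\rho_F(x,y)=\max_{g\in F}\rho(gx,gy)$. $\mathrm H^s_\varepsilon(X,\rho)=\inf\{\sum_{i\ge1}(\mathrm{diam}_\rho E_i)^s: X=\bigcup_iE_i,\ \mathrm{diam}_\rho E_i<\varepsilon\}$ (with $0^0=1$), $\dim_{\mathrm H}(X,\rho,\varepsilon)=\sup\{s\ge0:\mathrm H^s_\varepsilon(X,\rho)\ge1\}$, and $\overline{\mathrm{mdim}}_{\mathrm H}(X,\{F_n\},\rho)=\lim_{\varepsilon\to0}\limsup_{n}\frac{\dim_{\mathrm H}(X,\rho_{F_n},\varepsilon)}{|F_n|}$. *)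

theory Defs
  imports "HOL-Analysis.Analysis"
begin

text \<open>The group G is a type 'g of class group_add (written additively, not
necessarily commutative) and countable; the action is act :: 'g => 'x => 'x on
the carrier X of a compact metric space (X, d).\<close>

definition G_system :: "('g::{group_add,countable} \<Rightarrow> 'x \<Rightarrow> 'x) \<Rightarrow> 'x set \<Rightarrow> ('x \<Rightarrow> 'x \<Rightarrow> real) \<Rightarrow> bool" where
  "G_system act X d \<longleftrightarrow>
     Metric_space X d \<and> compact_space (Metric_space.mtopology X d) \<and>
     (\<forall>x\<in>X. act 0 x = x) \<and>
     (\<forall>g h. \<forall>x\<in>X. act (g + h) x = act g (act h x)) \<and>
     (\<forall>g. act g ` X \<subseteq> X \<and>
          continuous_map (Metric_space.mtopology X d) (Metric_space.mtopology X d) (act g))"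

definition symdiff :: "'a set \<Rightarrow> 'a set \<Rightarrow> 'a set" where
  "symdiff A B = (A - B) \<union> (B - A)"

definition folner :: "(nat \<Rightarrow> 'g::group_add set) \<Rightarrow> bool" where
  "folner F \<longleftrightarrow> (\<forall>n. finite (F n) \<and> F n \<noteq> {}) \<and>
     (\<forall>g. (\<lambda>n. real (card (symdiff ((\<lambda>h. g + h) ` F n) (F n))) / real (card (F n)))
            \<longlonglongrightarrow> 0)"

definition dyn_metric :: "('g \<Rightarrow> 'x \<Rightarrow> 'x) \<Rightarrow> ('x \<Rightarrow> 'x \<Rightarrow> real) \<Rightarrow> 'g set \<Rightarrow> 'x \<Rightarrow> 'x \<Rightarrow> real" where
  "dyn_metric act \<rho> F x y = Max ((\<lambda>g. \<rho> (act g x) (act g y)) ` F)"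

definition diam_rho :: "('x \<Rightarrow> 'x \<Rightarrow> real) \<Rightarrow> 'x set \<Rightarrow> real" where
  "diam_rho \<rho> E = (if E = {} then 0 else (SUP p\<in>E \<times> E. \<rho> (fst p) (snd p)))"

text \<open>power with the convention 0^0 = 1\<close>
definition pw :: "real \<Rightarrow> real \<Rightarrow> real" where
  "pw a s = (if s = 0 then 1 else a powr s)"

definition hausdorff_content :: "'x set \<Rightarrow> ('x \<Rightarrow> 'x \<Rightarrow> real) \<Rightarrow> real \<Rightarrow> real \<Rightarrow> ennreal" where
  "hausdorff_content X \<rho> eps s =
     (INF (I, E) \<in> {(I :: nat set, E :: nat \<Rightarrow> 'x set).
                     X = (\<Union>i\<in>I. E i) \<and> (\<forall>i\<in>I. diam_rho \<rho> (E i) < eps)}.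
        (\<Sum>i. if i \<in> I then ennreal (pw (diam_rho \<rho> (E i)) s) else 0))"

definition dimH :: "'x set \<Rightarrow> ('x \<Rightarrow> 'x \<Rightarrow> real) \<Rightarrow> real \<Rightarrow> ereal" where
  "dimH X \<rho> eps = Sup {ereal s | s. s \<ge> 0 \<and> hausdorff_content X \<rho> eps s \<ge> 1}"

definition upper_mdimH :: "('g \<Rightarrow> 'x \<Rightarrow> 'x) \<Rightarrow> 'x set \<Rightarrow> (nat \<Rightarrow> 'g set) \<Rightarrow> ('x \<Rightarrow> 'x \<Rightarrow> real) \<Rightarrow> ereal" where
  "upper_mdimH act X F \<rho> =
     Lim (at_right 0) (\<lambda>eps. limsup (\<lambda>n. dimH X (dyn_metric act \<rho> (F n)) eps / ereal (real (card (F n)))))"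

definition d_alpha_eps :: "('x \<Rightarrow> 'x \<Rightarrow> real) \<Rightarrow> real \<Rightarrow> real \<Rightarrow> 'x \<Rightarrow> 'x \<Rightarrow> real" where
  "d_alpha_eps d \<alpha> \<epsilon> x y = (if d x y \<ge> \<epsilon> then d x y else \<epsilon> powr (1 - \<alpha>) * d x y powr \<alpha>)"

end

theory Submission imports Defs begin

definition psi :: "real \<Rightarrow> real \<Rightarrow> real \<Rightarrow> real" where
  "psi a e t = max t (e powr (1-a) * (max t 0) powr a)"

lemma psi_mono: assumes "0 < a" "0 < e" shows "mono (psi a e)"
proof (rule monoI)
  fix x y :: real assume "x \<le> y"
  hence "max x 0 powr a \<le> max y 0 powr a" using assms by (intro powr_mono2) auto
  hence "e powr (1-a) * max x 0 powr a \<le> e powr (1-a) * max y 0 powr a"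
    by (intro mult_left_mono) auto
  thus "psi a e x \<le> psi a e y" unfolding psi_def using \<open>x \<le> y\<close> by linarith
qed

lemma psi_cont: assumes "0 < a" shows "continuous_on UNIV (psi a e)"
  unfolding psi_def using assms
  by (intro continuous_intros continuous_on_powr') auto

lemma psi_strict: assumes "0 < a" "0 < e" "0 \<le> x" "x < y" shows "psi a e x < psi a e y"
proof -
  have "max x 0 powr a < max y 0 powr a" using assms by (intro powr_less_mono2) auto
  hence "e powr (1-a) * max x 0 powr a < e powr (1-a) * max y 0 powr a"
    using assms by (intro mult_strict_left_mono) auto
  thus ?thesis unfolding psi_def using assms by linarith
qed

lemma psi_less_iff: assumes "0 < a" "0 < e" "0 \<le> x" "0 \<le> y" shows "psi a e x < psi a e y \<longleftrightarrow> x < y"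
  using psi_strict[OF assms(1,2,3)] psi_strict[OF assms(1,2,4)] psi_mono[OF assms(1,2)]
  by (metis linorder_not_le monoD)

lemma psi_dae: assumes "0 < a" "a < 1" "0 < e" "0 \<le> t"
  shows "(if e \<le> t then t else e powr (1-a) * t powr a) = psi a e t"
proof (cases "e \<le> t")
  case True
  hence tp: "t > 0" using assms by auto
  have "e powr (1-a) \<le> t powr (1-a)" using True assms by (intro powr_mono2) auto
  hence "e powr (1-a) * t powr a \<le> t powr (1-a) * t powr a" by (intro mult_right_mono) auto
  also have "\<dots> = t" using tp by (simp add: powr_add[symmetric])
  finally show ?thesis using True assms unfolding psi_def by auto
next
  case False
  show ?thesis
  proof (cases "t = 0")
    case True thus ?thesis using False assms unfolding psi_def by auto
  next
    case t0: False
    hence tp: "t > 0" using assms by auto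
    have "t powr (1-a) \<le> e powr (1-a)" using False assms by (intro powr_mono2) auto
    hence "t powr (1-a) * t powr a \<le> e powr (1-a) * t powr a" by (intro mult_right_mono) auto
    moreover have "t powr (1-a) * t powr a = t" using tp by (simp add: powr_add[symmetric])
    ultimately show ?thesis using False assms unfolding psi_def by auto
  qed
qed

lemma psi_small: assumes "0 < a" "a < 1" "0 < e" "0 \<le> t" "t \<le> e"
  shows "psi a e t = e powr (1-a) * t powr a"
proof (cases "t = e")
  case True thus ?thesis using psi_dae[OF assms(1-4)] assms
    by (simp add: powr_add[symmetric])
next
  case False thus ?thesis using psi_dae[OF assms(1-4)] assms by auto
qed


lemma psi_zero: "psi a e 0 = 0" unfolding psi_def
  by (cases "a = 0") auto

lemma diam_psi:
  assumes a: "0 < a" "0 < e"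
    and EX: "E \<subseteq> X"
    and eq: "\<forall>x\<in>X. \<forall>y\<in>X. \<rho>' x y = psi a e (\<rho> x y)"
    and bd: "\<forall>x\<in>X. \<forall>y\<in>X. \<rho> x y \<le> B"
  shows "diam_rho \<rho>' E = psi a e (diam_rho \<rho> E)"
proof (cases "E = {}")
  case True thus ?thesis by (simp add: diam_rho_def psi_zero)
next
  case False
  let ?S = "(\<lambda>p. \<rho> (fst p) (snd p)) ` (E \<times> E)"
  have "diam_rho \<rho>' E = (SUP p\<in>E \<times> E. psi a e (\<rho> (fst p) (snd p)))"
    unfolding diam_rho_def using False EX eq by (simp, intro SUP_cong) (auto, meson subsetD)
  also have "\<dots> = (SUP s\<in>?S. psi a e s)" by (simp add: image_comp)
  also have "\<dots> = psi a e (Sup ?S)"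
  proof (rule continuous_at_Sup_mono[symmetric])
    show "mono (psi a e)" using psi_mono a by auto
    have "isCont (psi a e) (Sup ?S)" using psi_cont[OF a(1), of e]
      by (simp add: continuous_on_eq_continuous_at)
    thus "continuous (at_left (Sup ?S)) (psi a e)"
      by (simp add: continuous_at_imp_continuous_within)
    show "?S \<noteq> {}" using False by auto
    show "bdd_above ?S" using bd EX by (auto intro!: bdd_aboveI[of _ B]) (meson subsetD)
  qed
  also have "Sup ?S = diam_rho \<rho> E" using False by (simp add: diam_rho_def)
  finally show ?thesis .
qed

lemma Gsys_facts:
  assumes "G_system act X d"
  shows "Metric_space X d" "\<And>g x. x \<in> X \<Longrightarrow> act g x \<in> X"
    "\<exists>B. \<forall>x\<in>X. \<forall>y\<in>X. d x y \<le> B"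
proof -
  show M: "Metric_space X d" using assms by (simp add: G_system_def)
  show "\<And>g x. x \<in> X \<Longrightarrow> act g x \<in> X" using assms unfolding G_system_def by blast
  interpret Metric_space X d by (rule M)
  have "compactin mtopology X" using assms by (simp add: G_system_def compact_space_def)
  hence "mbounded X" by (rule compactin_imp_mbounded)
  then obtain z r where z: "X \<subseteq> mcball z r" by (auto simp: mbounded_def)
  have "\<forall>x\<in>X. \<forall>y\<in>X. d x y \<le> 2 * r"
  proof (intro ballI)
    fix x y assume "x \<in> X" "y \<in> X"
    hence "d z x \<le> r" "d z y \<le> r" "z \<in> X" using z by auto
    moreover have "d x y \<le> d x z + d z y" using \<open>x\<in>X\<close> \<open>y\<in>X\<close> \<open>z\<in>X\<close> triangle by blast
    ultimately show "d x y \<le> 2 * r" using commute by auto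
  qed
  thus "\<exists>B. \<forall>x\<in>X. \<forall>y\<in>X. d x y \<le> B" by blast
qed

lemma dyn_facts:
  assumes "G_system act X d" "finite A" "A \<noteq> {}" "0 < a" "a < 1" "0 < e"
  shows "\<forall>x\<in>X. \<forall>y\<in>X. dyn_metric act (d_alpha_eps d a e) A x y = psi a e (dyn_metric act d A x y)"
    "\<forall>x\<in>X. \<forall>y\<in>X. 0 \<le> dyn_metric act d A x y"
    "\<exists>B. \<forall>x\<in>X. \<forall>y\<in>X. dyn_metric act d A x y \<le> B"
proof -
  note G = Gsys_facts[OF assms(1)]
  interpret Metric_space X d by (rule G(1))
  obtain B where B: "\<forall>x\<in>X. \<forall>y\<in>X. d x y \<le> B" using G(3) by blast
  show "\<forall>x\<in>X. \<forall>y\<in>X. dyn_metric act (d_alpha_eps d a e) A x y = psi a e (dyn_metric act d A x y)"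
  proof (intro ballI)
    fix x y assume xy: "x \<in> X" "y \<in> X"
    have "dyn_metric act (d_alpha_eps d a e) A x y = Max ((\<lambda>g. psi a e (d (act g x) (act g y))) ` A)"
      unfolding dyn_metric_def d_alpha_eps_def using xy G(2) psi_dae[OF assms(4,5,6)]
      by (intro arg_cong[where f=Max] image_cong) auto
    also have "\<dots> = Max (psi a e ` ((\<lambda>g. d (act g x) (act g y)) ` A))" by (simp add: image_comp o_def)
    also have "\<dots> = psi a e (dyn_metric act d A x y)" unfolding dyn_metric_def
      using assms psi_mono by (intro mono_Max_commute[symmetric]) auto
    finally show "dyn_metric act (d_alpha_eps d a e) A x y = psi a e (dyn_metric act d A x y)" .
  qed
  show "\<forall>x\<in>X. \<forall>y\<in>X. 0 \<le> dyn_metric act d A x y"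
  proof (intro ballI)
    fix x y assume xy: "x \<in> X" "y \<in> X"
    obtain g where g: "g \<in> A" using assms by auto
    have "0 \<le> d (act g x) (act g y)" using xy G(2) by auto
    also have "\<dots> \<le> dyn_metric act d A x y" unfolding dyn_metric_def using g assms by auto
    finally show "0 \<le> dyn_metric act d A x y" .
  qed
  show "\<exists>B. \<forall>x\<in>X. \<forall>y\<in>X. dyn_metric act d A x y \<le> B"
    using B G(2) assms(2,3) unfolding dyn_metric_def by (intro exI[of _ B]) auto
qed


lemma diam_nonneg:
  assumes "E \<subseteq> X" "\<forall>x\<in>X. \<forall>y\<in>X. 0 \<le> \<rho> x y \<and> \<rho> x y \<le> B"
  shows "0 \<le> diam_rho \<rho> E"
proof (cases "E = {}")
  case True thus ?thesis by (simp add: diam_rho_def)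
next
  case False
  then obtain x where x: "x \<in> E" by auto
  have "0 \<le> \<rho> (fst (x,x)) (snd (x,x))" using assms x by auto
  also have "\<dots> \<le> (SUP p\<in>E \<times> E. \<rho> (fst p) (snd p))"
    using x assms by (intro cSUP_upper) (auto intro!: bdd_aboveI[of _ B], meson subsetD)
  finally show ?thesis using False by (simp add: diam_rho_def)
qed

lemma pw_nonneg: "0 \<le> D \<Longrightarrow> 0 \<le> pw D s" by (simp add: pw_def)

lemma pw_psi:
  assumes "0 < c" "0 < a" "0 \<le> s" "0 \<le> D"
  shows "pw (c * D powr a) s = c powr s * pw D (a * s)"
proof (cases "s = 0")
  case True thus ?thesis using assms by (simp add: pw_def)
next
  case False
  hence "a * s \<noteq> 0" using assms by auto
  thus ?thesis using False assms unfolding pw_def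
    by (simp add: powr_mult powr_powr)
qed

lemma pw_shift:
  assumes "0 \<le> D" "D < r" "0 \<le> t'" "t' \<le> t"
  shows "pw D t \<le> r powr (t - t') * pw D t'"
proof (cases "t = 0")
  case True thus ?thesis using assms by (simp add: pw_def)
next
  case tn: False
  show ?thesis
  proof (cases "D = 0")
    case True thus ?thesis using tn assms by (simp add: pw_def)
  next
    case Dn: False
    hence Dp: "D > 0" using assms by auto
    have "D powr (t - t') \<le> r powr (t - t')" using assms by (intro powr_mono2) auto
    hence "D powr (t - t') * D powr t' \<le> r powr (t - t') * D powr t'"
      by (intro mult_right_mono) auto
    moreover have "D powr (t - t') * D powr t' = D powr t" by (simp add: powr_add[symmetric])
    ultimately show ?thesis using tn Dp unfolding pw_def by auto
  qed
qed

definition cc :: "real \<Rightarrow> real \<Rightarrow> real" where "cc a e = e powr (1 - a)"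
definition dd :: "real \<Rightarrow> real \<Rightarrow> real \<Rightarrow> real" where "dd a e \<delta> = (\<delta> / cc a e) powr (1 / a)"

context
  fixes X :: "'x set" and \<rho> \<rho>' :: "'x \<Rightarrow> 'x \<Rightarrow> real" and a e \<delta> B :: real
  assumes a: "0 < a" "a < 1" and e: "0 < e" "e < 1" and dl: "0 < \<delta>" "\<delta> \<le> e"
    and eq: "\<forall>x\<in>X. \<forall>y\<in>X. \<rho>' x y = psi a e (\<rho> x y)"
    and bd: "\<forall>x\<in>X. \<forall>y\<in>X. 0 \<le> \<rho> x y \<and> \<rho> x y \<le> B"
begin

lemma cc_pos: "0 < (cc a e)" using e by (simp add: cc_def)
lemma cc_le1: "(cc a e) \<le> 1" using e a unfolding cc_def by (intro powr_le1) auto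
lemma dd_pos: "0 < (dd a e \<delta>)" using dl cc_pos by (simp add: dd_def)

lemma dd_le: "(dd a e \<delta>) \<le> e"
proof -
  have "\<delta> / (cc a e) \<le> e / (cc a e)" using dl cc_pos by (simp add: divide_right_mono)
  also have "e / (cc a e) = e powr a" using e by (simp add: cc_def powr_diff)
  finally have "(\<delta>/(cc a e)) powr (1/a) \<le> (e powr a) powr (1/a)" using dl cc_pos a by (intro powr_mono2) auto
  also have "\<dots> = e" using a e by (simp add: powr_powr)
  finally show ?thesis by (simp add: dd_def)
qed

lemma psi_dd: "psi a e (dd a e \<delta>) = \<delta>"
proof -
  have "psi a e (dd a e \<delta>) = (cc a e) * (dd a e \<delta>) powr a" using psi_small[OF a e(1)] dd_pos dd_le by (simp add: cc_def)
  also have "(dd a e \<delta>) powr a = \<delta> / (cc a e)" using a dl cc_pos by (simp add: dd_def powr_powr)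
  finally show ?thesis using cc_pos by simp
qed

lemma diam_rel: "E \<subseteq> X \<Longrightarrow> diam_rho \<rho>' E = psi a e (diam_rho \<rho> E)"
  using diam_psi[of a e E X \<rho>' \<rho> B] a e eq bd by auto

lemma cover_iff: "X = (\<Union>i\<in>I. E i) \<Longrightarrow> i \<in> I \<Longrightarrow> diam_rho \<rho>' (E i) < \<delta> \<longleftrightarrow> diam_rho \<rho> (E i) < (dd a e \<delta>)"
proof -
  assume "X = (\<Union>i\<in>I. E i)" "i \<in> I"
  hence sub: "E i \<subseteq> X" by auto
  have "diam_rho \<rho>' (E i) < \<delta> \<longleftrightarrow> psi a e (diam_rho \<rho> (E i)) < psi a e (dd a e \<delta>)"
    using diam_rel[OF sub] psi_dd by simp
  also have "\<dots> \<longleftrightarrow> diam_rho \<rho> (E i) < (dd a e \<delta>)"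
    using psi_less_iff[OF a(1) e(1)] diam_nonneg[OF sub bd] dd_pos by auto
  finally show ?thesis .
qed

lemma term_rel:
  assumes "X = (\<Union>i\<in>I. E i)" "i \<in> I" "diam_rho \<rho> (E i) < (dd a e \<delta>)" "0 \<le> s"
  shows "pw (diam_rho \<rho>' (E i)) s = (cc a e) powr s * pw (diam_rho \<rho> (E i)) (a * s)"
proof -
  have sub: "E i \<subseteq> X" using assms by auto
  have D0: "0 \<le> diam_rho \<rho> (E i)" by (rule diam_nonneg[OF sub bd])
  have "diam_rho \<rho>' (E i) = (cc a e) * diam_rho \<rho> (E i) powr a"
    using diam_rel[OF sub] psi_small[OF a e(1) D0] assms(3) dd_le by (simp add: cc_def)
  thus ?thesis using pw_psi[OF cc_pos a(1) assms(4) D0] by simp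
qed

lemma H_le:
  assumes "0 \<le> s"
  shows "hausdorff_content X \<rho>' \<delta> s \<le> hausdorff_content X \<rho> (dd a e \<delta>) (a * s)"
  unfolding hausdorff_content_def
proof (rule INF_mono)
  fix m assume m: "m \<in> {(I :: nat set, E :: nat \<Rightarrow> 'x set). X = (\<Union>i\<in>I. E i) \<and> (\<forall>i\<in>I. diam_rho \<rho> (E i) < (dd a e \<delta>))}"
  obtain I E where mIE: "m = (I, E)" by fastforce
  have cov: "X = (\<Union>i\<in>I. E i)" "\<forall>i\<in>I. diam_rho \<rho> (E i) < (dd a e \<delta>)" using m mIE by auto
  hence m2: "(I,E) \<in> {(I :: nat set, E :: nat \<Rightarrow> 'x set). X = (\<Union>i\<in>I. E i) \<and> (\<forall>i\<in>I. diam_rho \<rho>' (E i) < \<delta>)}"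
    using cover_iff[OF cov(1)] by auto
  have "(\<Sum>i. if i \<in> I then ennreal (pw (diam_rho \<rho>' (E i)) s) else 0)
      \<le> (\<Sum>i. if i \<in> I then ennreal (pw (diam_rho \<rho> (E i)) (a * s)) else 0)"
  proof (intro suminf_le summableI)
    fix i show "(if i \<in> I then ennreal (pw (diam_rho \<rho>' (E i)) s) else 0)
      \<le> (if i \<in> I then ennreal (pw (diam_rho \<rho> (E i)) (a * s)) else 0)"
    proof (cases "i \<in> I")
      case True
      have sub: "E i \<subseteq> X" using cov True by auto
      have "(cc a e) powr s * pw (diam_rho \<rho> (E i)) (a * s) \<le> 1 * pw (diam_rho \<rho> (E i)) (a * s)"
        using cc_pos cc_le1 assms pw_nonneg[OF diam_nonneg[OF sub bd]]
        by (intro mult_right_mono powr_le1) auto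
      thus ?thesis using True term_rel[OF cov(1) True _ assms] cov(2) by (auto intro: ennreal_leI)
    qed auto
  qed
  thus "\<exists>n\<in>{(I :: nat set, E :: nat \<Rightarrow> 'x set). X = (\<Union>i\<in>I. E i) \<and> (\<forall>i\<in>I. diam_rho \<rho>' (E i) < \<delta>)}.
          (case n of (I, E) \<Rightarrow> \<Sum>i. if i \<in> I then ennreal (pw (diam_rho \<rho>' (E i)) s) else 0)
        \<le> (case m of (I, E) \<Rightarrow> \<Sum>i. if i \<in> I then ennreal (pw (diam_rho \<rho> (E i)) (a * s)) else 0)"
    using m2 mIE by (intro bexI[of _ "(I,E)"]) auto
qed

lemma H_ge:
  assumes "0 \<le> s" "a * s \<le> t" "(dd a e \<delta>) powr (t - a * s) \<le> (cc a e) powr s"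
  shows "hausdorff_content X \<rho> (dd a e \<delta>) t \<le> hausdorff_content X \<rho>' \<delta> s"
  unfolding hausdorff_content_def
proof (rule INF_mono)
  fix m assume m: "m \<in> {(I :: nat set, E :: nat \<Rightarrow> 'x set). X = (\<Union>i\<in>I. E i) \<and> (\<forall>i\<in>I. diam_rho \<rho>' (E i) < \<delta>)}"
  obtain I E where mIE: "m = (I, E)" by fastforce
  have cov: "X = (\<Union>i\<in>I. E i)" "\<forall>i\<in>I. diam_rho \<rho>' (E i) < \<delta>" using m mIE by auto
  hence cov2: "\<forall>i\<in>I. diam_rho \<rho> (E i) < (dd a e \<delta>)" using cover_iff[OF cov(1)] by auto
  hence m2: "(I,E) \<in> {(I :: nat set, E :: nat \<Rightarrow> 'x set). X = (\<Union>i\<in>I. E i) \<and> (\<forall>i\<in>I. diam_rho \<rho> (E i) < (dd a e \<delta>))}"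
    using cov by auto
  have "(\<Sum>i. if i \<in> I then ennreal (pw (diam_rho \<rho> (E i)) t) else 0)
      \<le> (\<Sum>i. if i \<in> I then ennreal (pw (diam_rho \<rho>' (E i)) s) else 0)"
  proof (intro suminf_le summableI)
    fix i show "(if i \<in> I then ennreal (pw (diam_rho \<rho> (E i)) t) else 0)
      \<le> (if i \<in> I then ennreal (pw (diam_rho \<rho>' (E i)) s) else 0)"
    proof (cases "i \<in> I")
      case True
      have sub: "E i \<subseteq> X" using cov True by auto
      have D0: "0 \<le> diam_rho \<rho> (E i)" by (rule diam_nonneg[OF sub bd])
      have "pw (diam_rho \<rho> (E i)) t \<le> (dd a e \<delta>) powr (t - a * s) * pw (diam_rho \<rho> (E i)) (a * s)"
        using pw_shift[OF D0] cov2 True assms a by auto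
      also have "\<dots> \<le> (cc a e) powr s * pw (diam_rho \<rho> (E i)) (a * s)"
        using assms(3) pw_nonneg[OF D0] by (intro mult_right_mono) auto
      finally show ?thesis using True term_rel[OF cov(1) True _ assms(1)] cov2 by (auto intro: ennreal_leI)
    qed auto
  qed
  thus "\<exists>n\<in>{(I :: nat set, E :: nat \<Rightarrow> 'x set). X = (\<Union>i\<in>I. E i) \<and> (\<forall>i\<in>I. diam_rho \<rho> (E i) < (dd a e \<delta>))}.
          (case n of (I, E) \<Rightarrow> \<Sum>i. if i \<in> I then ennreal (pw (diam_rho \<rho> (E i)) t) else 0)
        \<le> (case m of (I, E) \<Rightarrow> \<Sum>i. if i \<in> I then ennreal (pw (diam_rho \<rho>' (E i)) s) else 0)"
    using m2 mIE by (intro bexI[of _ "(I,E)"]) auto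
qed


lemma dim_upper: "dimH X \<rho>' \<delta> \<le> dimH X \<rho> (dd a e \<delta>) / ereal a"
  unfolding dimH_def
proof (rule Sup_least)
  fix x assume "x \<in> {ereal s |s. 0 \<le> s \<and> 1 \<le> hausdorff_content X \<rho>' \<delta> s}"
  then obtain s where s: "x = ereal s" "0 \<le> s" "1 \<le> hausdorff_content X \<rho>' \<delta> s" by auto
  have "1 \<le> hausdorff_content X \<rho> (dd a e \<delta>) (a * s)" using order.trans[OF s(3) H_le[OF s(2)]] .
  hence "ereal (a * s) \<in> {ereal s |s. 0 \<le> s \<and> 1 \<le> hausdorff_content X \<rho> (dd a e \<delta>) s}"
    using s a by auto
  hence "ereal (a * s) \<le> Sup {ereal s |s. 0 \<le> s \<and> 1 \<le> hausdorff_content X \<rho> (dd a e \<delta>) s}"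
    by (rule Sup_upper)
  thus "x \<le> Sup {ereal s |s. 0 \<le> s \<and> 1 \<le> hausdorff_content X \<rho> (dd a e \<delta>) s} / ereal a"
    using s a by (subst ereal_le_divide_pos) auto
qed

lemma dim_lower:
  assumes dd1: "(dd a e \<delta>) < 1" and kpos: "0 < 1/a - (- ln (cc a e)) / (a^2 * (- ln (dd a e \<delta>)))"
  shows "ereal (1/a - (- ln (cc a e)) / (a^2 * (- ln (dd a e \<delta>)))) * dimH X \<rho> (dd a e \<delta>) \<le> dimH X \<rho>' \<delta>"
proof -
  define l where "l = - ln (cc a e)"
  define L where "L = - ln (dd a e \<delta>)"
  define k where "k = 1/a - l / (a^2 * L)"
  have l0: "0 \<le> l" using cc_le1 cc_pos by (simp add: l_def)
  have L0: "0 < L" using dd1 dd_pos by (simp add: L_def)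
  have k0: "0 < k" using kpos by (simp add: k_def l_def L_def)
  have kle: "k \<le> 1/a" using l0 L0 a by (simp add: k_def)
  have "dimH X \<rho> (dd a e \<delta>) \<le> dimH X \<rho>' \<delta> / ereal k"
    unfolding dimH_def
  proof (rule Sup_least)
    fix x assume "x \<in> {ereal s |s. 0 \<le> s \<and> 1 \<le> hausdorff_content X \<rho> (dd a e \<delta>) s}"
    then obtain t where t: "x = ereal t" "0 \<le> t" "1 \<le> hausdorff_content X \<rho> (dd a e \<delta>) t" by auto
    define s where "s = k * t"
    have s0: "0 \<le> s" using k0 t by (simp add: s_def)
    have ak: "a * k = 1 - l / (a * L)" using a L0 by (simp add: k_def field_simps power2_eq_square)
    have "t - a * s = t * (1 - a * k)" by (simp add: s_def algebra_simps)
    hence tas: "t - a * s = t * l / (a * L)" using ak by simp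
    have "a * s \<le> t" using tas t l0 a L0 by (smt (verit) divide_nonneg_nonneg mult_nonneg_nonneg)
    have "k * t \<le> (1/a) * t" using kle t by (intro mult_right_mono) auto
    hence "(k * t) * l \<le> ((1/a) * t) * l" using l0 by (rule mult_right_mono)
    hence "s * l \<le> (t / a) * l" by (simp add: s_def)
    also have "(t / a) * l = (t - a * s) * L" using tas a L0 by (simp add: field_simps)
    finally have key: "(t - a * s) * ln (dd a e \<delta>) \<le> s * ln (cc a e)" by (simp add: l_def L_def)
    have "(dd a e \<delta>) powr (t - a * s) \<le> (cc a e) powr s"
      using dd_pos cc_pos key by (simp add: powr_def)
    hence "hausdorff_content X \<rho> (dd a e \<delta>) t \<le> hausdorff_content X \<rho>' \<delta> s"
      using H_ge[OF s0 \<open>a * s \<le> t\<close>] by blast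
    hence "ereal s \<in> {ereal s |s. 0 \<le> s \<and> 1 \<le> hausdorff_content X \<rho>' \<delta> s}"
      using t s0 by auto
    hence "ereal s \<le> Sup {ereal s |s. 0 \<le> s \<and> 1 \<le> hausdorff_content X \<rho>' \<delta> s}" by (rule Sup_upper)
    thus "x \<le> Sup {ereal s |s. 0 \<le> s \<and> 1 \<le> hausdorff_content X \<rho>' \<delta> s} / ereal k"
      using t k0 by (subst ereal_le_divide_pos) (auto simp: s_def)
  qed
  hence "ereal k * dimH X \<rho> (dd a e \<delta>) \<le> dimH X \<rho>' \<delta>" using k0 by (subst (asm) ereal_le_divide_pos) auto
  thus ?thesis by (simp add: k_def l_def L_def)
qed

end



lemma dimH_anti:
  assumes "0 < e1" "e1 \<le> e2" shows "dimH X \<rho> e2 \<le> dimH X \<rho> e1"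
proof -
  have "\<And>s. hausdorff_content X \<rho> e2 s \<le> hausdorff_content X \<rho> e1 s"
    unfolding hausdorff_content_def using assms
    by (intro INF_superset_mono) auto
  hence "{ereal s |s. 0 \<le> s \<and> 1 \<le> hausdorff_content X \<rho> e2 s} \<subseteq> {ereal s |s. 0 \<le> s \<and> 1 \<le> hausdorff_content X \<rho> e1 s}"
    using order_trans by blast
  thus ?thesis unfolding dimH_def by (rule Sup_subset_mono)
qed

lemma ereal_div_pos_mono: "x \<le> y \<Longrightarrow> 0 < c \<Longrightarrow> x / ereal c \<le> y / ereal (c::real)"
  unfolding divide_ereal_def by (intro ereal_mult_right_mono) auto

lemma anti_lim:
  fixes B :: "real \<Rightarrow> ereal" and g :: "real \<Rightarrow> real"
  assumes anti: "\<And>x y. 0 < x \<Longrightarrow> x \<le> y \<Longrightarrow> B y \<le> B x"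
    and g: "(g \<longlongrightarrow> 0) (at_right 0)" "eventually (\<lambda>x. 0 < g x) (at_right 0)"
  shows "((\<lambda>x. B (g x)) \<longlongrightarrow> (SUP e\<in>{0<..}. B e)) (at_right 0)"
proof (rule order_tendstoI)
  fix y assume "y < (SUP e\<in>{0<..}. B e)"
  then obtain e0 where e0: "0 < e0" "y < B e0" by (auto simp: less_SUP_iff)
  have "eventually (\<lambda>x. g x < e0) (at_right 0)" using order_tendstoD(2)[OF g(1) e0(1)] .
  with g(2) show "eventually (\<lambda>x. y < B (g x)) (at_right 0)"
  proof (rule eventually_elim2)
    fix x assume "0 < g x" "g x < e0"
    thus "y < B (g x)" using anti[of "g x" e0] e0 by auto
  qed
next
  fix y assume y: "(SUP e\<in>{0<..}. B e) < y"
  from g(2) show "eventually (\<lambda>x. B (g x) < y) (at_right 0)"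
  proof (rule eventually_mono)
    fix x assume "0 < g x"
    hence "B (g x) \<le> (SUP e\<in>{0<..}. B e)" by (intro SUP_upper) auto
    thus "B (g x) < y" using y by auto
  qed
qed

lemma limsup_steps:
  fixes u v :: "nat \<Rightarrow> ereal" and c :: "nat \<Rightarrow> real"
  assumes c: "\<forall>n. c n > 0" and lo: "\<forall>n. ereal k * u n \<le> v n" and up: "\<forall>n. v n \<le> u n / ereal al"
    and k: "k \<ge> 0" and al: "al > 0"
  shows "ereal k * limsup (\<lambda>n. u n / ereal (c n)) \<le> limsup (\<lambda>n. v n / ereal (c n))"
    and "limsup (\<lambda>n. v n / ereal (c n)) \<le> limsup (\<lambda>n. u n / ereal (c n)) * ereal (1/al)"
proof -
  have "ereal k * limsup (\<lambda>n. u n / ereal (c n)) = limsup (\<lambda>n. ereal k * (u n / ereal (c n)))"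
    using k by (simp add: limsup_ereal_mult_left)
  also have "\<dots> \<le> limsup (\<lambda>n. v n / ereal (c n))"
  proof (intro Limsup_mono always_eventually allI)
    fix n
    have "ereal k * (u n / ereal (c n)) = (ereal k * u n) / ereal (c n)"
      by (simp add: divide_ereal_def mult.assoc)
    also have "\<dots> \<le> v n / ereal (c n)" using lo c by (intro ereal_div_pos_mono) auto
    finally show "ereal k * (u n / ereal (c n)) \<le> v n / ereal (c n)" .
  qed
  finally show "ereal k * limsup (\<lambda>n. u n / ereal (c n)) \<le> limsup (\<lambda>n. v n / ereal (c n))" .
  have "limsup (\<lambda>n. v n / ereal (c n)) \<le> limsup (\<lambda>n. (u n / ereal (c n)) * ereal (1/al))"
  proof (intro Limsup_mono always_eventually allI)
    fix n
    have "v n / ereal (c n) \<le> (u n / ereal al) / ereal (c n)" using up c by (intro ereal_div_pos_mono) auto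
    also have "\<dots> = (u n / ereal (c n)) * ereal (1/al)" using al c
      by (simp add: divide_ereal_def mult.assoc mult.commute[of "inverse (ereal (c n))"] divide_inverse mult.commute[of "inverse al"])
    finally show "v n / ereal (c n) \<le> (u n / ereal (c n)) * ereal (1/al)" .
  qed
  also have "\<dots> = limsup (\<lambda>n. u n / ereal (c n)) * ereal (1/al)"
    by (rule limsup_ereal_mult_right) (use al in simp)
  finally show "limsup (\<lambda>n. v n / ereal (c n)) \<le> limsup (\<lambda>n. u n / ereal (c n)) * ereal (1/al)" .
qed


theorem mainTheorem11:
  fixes act :: "'g::{group_add,countable} \<Rightarrow> 'x \<Rightarrow> 'x"
    and X :: "'x set" and d :: "'x \<Rightarrow> 'x \<Rightarrow> real" and F :: "nat \<Rightarrow> 'g set"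
    and \<alpha> \<epsilon> :: real
  assumes "G_system act X d"
    and "folner F"
    and "0 < \<alpha>" "\<alpha> < 1" "0 < \<epsilon>" "\<epsilon> < 1"
  shows "upper_mdimH act X F (d_alpha_eps d \<alpha> \<epsilon>) = upper_mdimH act X F d / ereal \<alpha>"
proof -
  have Fn: "\<And>n. finite (F n)" "\<And>n. F n \<noteq> {}" using assms(2) by (auto simp: folner_def)
  define c where "c n = real (card (F n))" for n
  have cpos: "\<forall>n. 0 < c n" using Fn by (simp add: c_def card_gt_0_iff)
  define \<rho> where "\<rho> n = dyn_metric act d (F n)" for n
  define \<rho>' where "\<rho>' n = dyn_metric act (d_alpha_eps d \<alpha> \<epsilon>) (F n)" for n
  define Bf where "Bf e = limsup (\<lambda>n. dimH X (\<rho> n) e / ereal (c n))" for e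
  define Af where "Af e = limsup (\<lambda>n. dimH X (\<rho>' n) e / ereal (c n))" for e
  have upd: "upper_mdimH act X F d = Lim (at_right 0) Bf"
    by (simp add: upper_mdimH_def Bf_def[abs_def] \<rho>_def c_def)
  have upd': "upper_mdimH act X F (d_alpha_eps d \<alpha> \<epsilon>) = Lim (at_right 0) Af"
    by (simp add: upper_mdimH_def Af_def[abs_def] \<rho>'_def c_def)
  have eqn: "\<forall>x\<in>X. \<forall>y\<in>X. \<rho>' n x y = psi \<alpha> \<epsilon> (\<rho> n x y)" for n
    using dyn_facts(1)[OF assms(1) Fn(1) Fn(2) assms(3,4,5)] by (simp add: \<rho>_def \<rho>'_def)
  have "\<exists>B. \<forall>x\<in>X. \<forall>y\<in>X. 0 \<le> \<rho> n x y \<and> \<rho> n x y \<le> B" for n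
    using dyn_facts(2,3)[OF assms(1) Fn(1) Fn(2) assms(3,4,5)] by (simp add: \<rho>_def)
  then obtain Bd where Bd: "\<And>n. \<forall>x\<in>X. \<forall>y\<in>X. 0 \<le> \<rho> n x y \<and> \<rho> n x y \<le> Bd n" by metis
  have anti: "Bf y \<le> Bf x" if "0 < x" "x \<le> y" for x y
    unfolding Bf_def
    by (intro Limsup_mono always_eventually allI ereal_div_pos_mono dimH_anti that) (use cpos in auto)
  define L0 where "L0 = (SUP e\<in>{0<..}. Bf e)"
  have "((\<lambda>x. Bf ((\<lambda>x. x) x)) \<longlongrightarrow> L0) (at_right 0)"
    unfolding L0_def
    by (rule anti_lim[OF anti]) (auto simp: eventually_at_right_less tendsto_ident_at)
  hence limB: "(Bf \<longlongrightarrow> L0) (at_right 0)" by simp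
  define g where "g \<delta> = dd \<alpha> \<epsilon> \<delta>" for \<delta>
  have ccpos: "0 < cc \<alpha> \<epsilon>" using assms by (simp add: cc_def)
  have g0: "(g \<longlongrightarrow> 0) (at_right 0)"
    unfolding g_def dd_def
    by (rule tendsto_zero_powrI[where b="1/\<alpha>"])
       (use assms ccpos in \<open>auto intro!: tendsto_divide_zero tendsto_ident_at
          simp: eventually_at_right_field\<close>)
  have gpos: "eventually (\<lambda>x. 0 < g x) (at_right 0)"
    unfolding eventually_at_right_field g_def dd_def using ccpos
    by (intro exI[of _ 1]) auto
  have limBg: "((\<lambda>x. Bf (g x)) \<longlongrightarrow> L0) (at_right 0)"
    unfolding L0_def by (rule anti_lim[OF anti g0 gpos])
  have gfl: "filterlim g (at_right 0) (at_right 0)"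
    unfolding filterlim_at using g0 gpos by (auto elim: eventually_mono)
  have "filterlim (\<lambda>x. ln (g x)) at_bot (at_right 0)"
    by (rule filterlim_compose[OF ln_at_0 gfl])
  hence Ltop: "filterlim (\<lambda>x. - ln (g x)) at_top (at_right 0)"
    by (simp add: filterlim_uminus_at_top)
  define kf where "kf \<delta> = 1/\<alpha> - (- ln (cc \<alpha> \<epsilon>)) / \<alpha>^2 * inverse (- ln (g \<delta>))" for \<delta>
  have "((\<lambda>\<delta>. 1/\<alpha> - (- ln (cc \<alpha> \<epsilon>)) / \<alpha>^2 * inverse (- ln (g \<delta>))) \<longlongrightarrow> 1/\<alpha> - (- ln (cc \<alpha> \<epsilon>)) / \<alpha>^2 * 0) (at_right 0)"
    by (intro tendsto_intros tendsto_inverse_0_at_top Ltop)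
  hence kfl: "(kf \<longlongrightarrow> 1/\<alpha>) (at_right 0)" unfolding kf_def[abs_def] by simp
  have ev: "eventually (\<lambda>\<delta>. 0 < \<delta> \<and> \<delta> \<le> \<epsilon> \<and> g \<delta> < 1 \<and> 0 < kf \<delta>) (at_right 0)"
  proof -
    have e1: "eventually (\<lambda>\<delta>. 0 < \<delta> \<and> \<delta> \<le> \<epsilon>) (at_right 0)"
      unfolding eventually_at_right_field using assms by (intro exI[of _ \<epsilon>]) auto
    have e2: "eventually (\<lambda>\<delta>. g \<delta> < 1) (at_right 0)" using order_tendstoD(2)[OF g0] by simp
    have e3: "eventually (\<lambda>\<delta>. 0 < kf \<delta>) (at_right 0)" using order_tendstoD(1)[OF kfl] assms by simp
    show ?thesis using e1 e2 e3 by eventually_elim auto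
  qed
  have bounds: "eventually (\<lambda>\<delta>. ereal (kf \<delta>) * Bf (g \<delta>) \<le> Af \<delta> \<and> Af \<delta> \<le> Bf (g \<delta>) * ereal (1/\<alpha>)) (at_right 0)"
    using ev
  proof eventually_elim
    case (elim \<delta>)
    hence dl: "0 < \<delta>" "\<delta> \<le> \<epsilon>" "g \<delta> < 1" "0 < kf \<delta>" by auto
    have kfe: "kf \<delta> = 1 / \<alpha> - - ln (cc \<alpha> \<epsilon>) / (\<alpha>\<^sup>2 * - ln (dd \<alpha> \<epsilon> \<delta>))"
      by (simp add: kf_def g_def divide_inverse mult.assoc)
    have lo: "\<forall>n. ereal (kf \<delta>) * dimH X (\<rho> n) (g \<delta>) \<le> dimH X (\<rho>' n) \<delta>"
    proof
      fix n show "ereal (kf \<delta>) * dimH X (\<rho> n) (g \<delta>) \<le> dimH X (\<rho>' n) \<delta>"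
        using dim_lower[OF assms(3,4,5,6) dl(1,2) eqn Bd] dl kfe by (simp add: g_def)
    qed
    have up: "\<forall>n. dimH X (\<rho>' n) \<delta> \<le> dimH X (\<rho> n) (g \<delta>) / ereal \<alpha>"
    proof
      fix n show "dimH X (\<rho>' n) \<delta> \<le> dimH X (\<rho> n) (g \<delta>) / ereal \<alpha>"
        using dim_upper[OF assms(3,4,5,6) dl(1,2) eqn Bd] by (simp add: g_def)
    qed
    show ?case using limsup_steps[OF cpos lo up _ assms(3)] dl(4) by (simp add: Af_def Bf_def)
  qed
  have lo_lim: "((\<lambda>\<delta>. ereal (kf \<delta>) * Bf (g \<delta>)) \<longlongrightarrow> ereal (1/\<alpha>) * L0) (at_right 0)"
    by (rule tendsto_mult_ereal[OF tendsto_ereal[OF kfl] limBg]) (use assms in auto)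
  have up_lim: "((\<lambda>\<delta>. Bf (g \<delta>) * ereal (1/\<alpha>)) \<longlongrightarrow> L0 * ereal (1/\<alpha>)) (at_right 0)"
    by (rule tendsto_mult_ereal[OF limBg tendsto_const]) (use assms in auto)
  have "(Af \<longlongrightarrow> L0 * ereal (1/\<alpha>)) (at_right 0)"
    by (rule tendsto_sandwich[OF eventually_mono[OF bounds] eventually_mono[OF bounds] _ up_lim])
       (use lo_lim in \<open>auto simp: mult.commute\<close>)
  hence "Lim (at_right 0) Af = L0 * ereal (1/\<alpha>)" by (intro tendsto_Lim) auto
  moreover have "Lim (at_right 0) Bf = L0" using limB by (intro tendsto_Lim) auto
  ultimately show ?thesis using upd upd' assms(3) by (simp add: divide_ereal_def inverse_eq_divide)
qed

end
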